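(* Let $a\geq 3$ and $m\geq 2a^2-a+2$ be integers, and suppose $[C(m,a)]$ is colored with red and blue so that there is no monochromatic solution of $L(m,a)$ in $[C(m,a)]$, with $a-2$ red and $a-1$ blue. Then $a$ is red and $m-1$ is blue.
   Context: For integers $m\geq 3$, $a\geq 1$, $L(m,a)$ denotes the equation $x_1+x_2+\cdots+x_{m-1}=a x_m$. For a positive integer $n$, $[n]=\{1,\dots,n\}$. A solution of $L(m,a)$ in $[n]$ is an $m$-tuple $(x_1,\dots,x_m)\in[n]^m$ (entries not necessarily distinct) satisfying the equation; given a 2-coloring of $[n]$, it is monochromatic if all $x_i$ have the same color. $C(m,a)$ denotes $\left\lceil \frac{m-1}{a}\left\lceil \frac{m-1}{a}\right\rceil\right\rceil$. *)

theory Defs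
  imports Complex_Main
begin

definition C :: "nat \<Rightarrow> nat \<Rightarrow> nat" where
  "C m a = nat \<lceil>(real (m - 1) / real a) * real_of_int \<lceil>real (m - 1) / real a\<rceil>\<rceil>"

definition is_solution :: "nat \<Rightarrow> nat \<Rightarrow> nat \<Rightarrow> (nat \<Rightarrow> nat) \<Rightarrow> bool" where
  "is_solution m a n x \<longleftrightarrow> (\<forall>i\<in>{1..m}. x i \<in> {1..n}) \<and> (\<Sum>i=1..m-1. x i) = a * x m"

text \<open>A 2-coloring is a map col : nat \<Rightarrow> bool (True = red, False = blue), relevant on [n].
  No monochromatic solution in [n].\<close>
definition no_mono_solution :: "nat \<Rightarrow> nat \<Rightarrow> nat \<Rightarrow> (nat \<Rightarrow> bool) \<Rightarrow> bool" where
  "no_mono_solution m a n col \<longleftrightarrow>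
     \<not> (\<exists>x. is_solution m a n x \<and> (\<exists>c. \<forall>i\<in>{1..m}. col (x i) = c))"

end

theory Submission
  imports Defs
begin

lemma sum_split_if:
  "k \<le> N \<Longrightarrow> (\<Sum>i=1..N. if i \<le> k then u else v) = k*u + (N-k)*(v::nat)"
proof (induction N)
  case 0 then show ?case by simp
next
  case (Suc N)
  show ?case
  proof (cases "k \<le> N")
    case True
    then show ?thesis using Suc by (simp add: Suc_diff_le)
  next
    case False
    then have "k = Suc N" using Suc.prems by simp
    then have "(\<Sum>i=1..Suc N. if i \<le> k then u else v) = (\<Sum>i=1..Suc N. u)"
      by (intro sum.cong) auto
    then show ?thesis using \<open>k = Suc N\<close> by simp
  qed
qed

lemma C_ge:
  assumes "a \<ge> 3" "m \<ge> 2 * a^2 - a + 2"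
  shows "m - 1 \<le> C m a"
proof -
  define q where "q = real (m - 1) / real a"
  have a2: "a * a \<le> m - 1"
  proof -
    have "a*a \<le> 2*a^2 - a" using assms(1) by (simp add: power2_eq_square) (metis mult_le_mono1 mult_1 le_add_diff order.trans one_le_numeral le_trans nat_le_linear mult_2 diff_add_inverse2 le_add2 add_le_mono le_add_same_cancel2 add_diff_assoc2 less_imp_le le_0_eq)
    then show ?thesis using assms(2) by linarith
  qed
  have apos: "real a > 0" using assms(1) by simp
  have "real a * real a \<le> real (m - 1)" using a2 by (metis of_nat_le_iff of_nat_mult)
  then have qa: "q \<ge> real a" unfolding q_def using apos by (simp add: field_simps)
  have "real_of_int \<lceil>q\<rceil> \<ge> real a" using qa le_of_int_ceiling order_trans by blast
  then have "q * real_of_int \<lceil>q\<rceil> \<ge> q * real a" using qa apos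
    by (intro mult_left_mono) auto
  also have "q * real a = real (m - 1)" unfolding q_def using apos by simp
  finally have "real (m-1) \<le> real_of_int \<lceil>q * real_of_int \<lceil>q\<rceil>\<rceil>"
    using le_of_int_ceiling order_trans by blast
  then have "int (m-1) \<le> \<lceil>q * real_of_int \<lceil>q\<rceil>\<rceil>" by linarith
  then show ?thesis unfolding C_def q_def by linarith
qed

theorem lemma3:
  fixes m a :: nat and col :: "nat \<Rightarrow> bool"
  assumes "a \<ge> 3" and "m \<ge> 2 * a^2 - a + 2"
    and "no_mono_solution m a (C m a) col"
    and "col (a - 2)" and "\<not> col (a - 1)"
  shows "col a \<and> \<not> col (m - 1)"
proof -
  have a2: "a * a \<le> m - 1"
  proof -
    have "a*a \<le> 2*a^2 - a" using assms(1) by (simp add: power2_eq_square) (metis mult_le_mono1 mult_1 le_add_diff order.trans one_le_numeral le_trans nat_le_linear mult_2 diff_add_inverse2 le_add2 add_le_mono le_add_same_cancel2 add_diff_assoc2 less_imp_le le_0_eq)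
    then show ?thesis using assms(2) by linarith
  qed
  have "3 * a \<le> a * a" using assms(1) by simp
  then have m2a: "2*a + 2 \<le> m - 1" using a2 assms(1) by linarith
  have Cge: "m - 1 \<le> C m a" using C_ge assms(1,2) .
  have nomono: "\<And>x c. is_solution m a (C m a) x \<Longrightarrow> (\<forall>i\<in>{1..m}. col (x i) = c) \<Longrightarrow> False"
    using assms(3) unfolding no_mono_solution_def by blast
  have cola: "col a"
  proof (rule ccontr)
    assume na: "\<not> col a"
    have r3: "col (m - 3)"
    proof (rule ccontr)
      assume n3: "\<not> col (m-3)"
      define x where "x = (\<lambda>i. if i = m then m - 3 else if i \<le> 2*a then a - 1 else a)"
      have "(\<Sum>i=1..m-1. x i) = (\<Sum>i=1..m-1. if i \<le> 2*a then a - 1 else a)"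
        unfolding x_def by (intro sum.cong) auto
      also have "\<dots> = 2*a*(a-1) + (m-1-2*a)*a" using m2a by (intro sum_split_if) simp
      also have "\<dots> = a * (m - 3)"
      proof -
        obtain d where "m - 1 = (2*a + 2) + d" using m2a le_Suc_ex by blast
        then have md: "m = 2*a + 3 + d" by linarith
        obtain b where ab: "a = b + 1" using assms(1) by (cases a) auto
        show ?thesis unfolding md ab by (simp add: algebra_simps)
      qed
      finally have s: "(\<Sum>i=1..m-1. x i) = a * x m" unfolding x_def by simp
      have "is_solution m a (C m a) x" unfolding is_solution_def
        using s Cge m2a assms(1) by (auto simp: x_def)
      moreover have "\<forall>i\<in>{1..m}. col (x i) = False" using na n3 assms(5) by (auto simp: x_def)
      ultimately show False using nomono by blast
    qed
    define x where "x = (\<lambda>i. if i = m then m - 3 else if i \<le> 2 then m - 3 else a - 2)"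
    have "(\<Sum>i=1..m-1. x i) = (\<Sum>i=1..m-1. if i \<le> 2 then m - 3 else a - 2)"
      unfolding x_def by (intro sum.cong) auto
    also have "\<dots> = 2*(m-3) + (m-1-2)*(a-2)" using m2a by (intro sum_split_if) simp
    also have "\<dots> = a * (m - 3)"
    proof -
      obtain d where "m - 1 = (2*a + 2) + d" using m2a le_Suc_ex by blast
      then have md: "m = 2*a + 3 + d" by linarith
      obtain b where ab: "a = b + 2" using assms(1) le_Suc_ex[of 2 a] by auto
      show ?thesis unfolding md ab by (simp add: algebra_simps)
    qed
    finally have s: "(\<Sum>i=1..m-1. x i) = a * x m" unfolding x_def by simp
    have "is_solution m a (C m a) x" unfolding is_solution_def
      using s Cge m2a assms(1) by (auto simp: x_def)
    moreover have "\<forall>i\<in>{1..m}. col (x i) = True" using r3 assms(4) by (auto simp: x_def)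
    ultimately show False using nomono by blast
  qed
  have "\<not> col (m - 1)"
  proof
    assume c1: "col (m - 1)"
    define x where "x = (\<lambda>i. if i = m then m - 1 else a)"
    have "(\<Sum>i=1..m-1. x i) = (\<Sum>i=1..m-1. a)"
      unfolding x_def by (intro sum.cong) auto
    then have s: "(\<Sum>i=1..m-1. x i) = a * x m" unfolding x_def by simp
    have "is_solution m a (C m a) x" unfolding is_solution_def
      using s Cge m2a assms(1) by (auto simp: x_def)
    moreover have "\<forall>i\<in>{1..m}. col (x i) = True" using c1 cola by (auto simp: x_def)
    ultimately show False using nomono by blast
  qed
  with cola show ?thesis by simp
qed

end
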